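(* Let $f:[0,1]\to[0,\infty)$ be continuous and non-decreasing with $f(u)>0$ for $u\in(0,1]$, let $0<\delta<1$, let $r$ be a positive integer, and fix $x>0$ and $y\in\mathbb{R}$. Then the functions $\mathbf{h}\mapsto\psi_{com}(\mathbf{h})$, $\mathbf{h}\mapsto\psi_{int}(\mathbf{h},y)$ and $\mathbf{h}\mapsto\psi_{ext}(\mathbf{h},x)$ defined in the context are concave on $[0,1-\delta]^r$.
   Context: Notation: $H(t)=-t\log t-(1-t)\log(1-t)$ (natural log); $\operatorname{erf}(x)=\frac2{\sqrt\pi}\int_0^xe^{-t^2}dt$; $\Phi$ the standard normal distribution function; $\lambda(u)=\frac{u^2}2+\log(2\Phi(u))$; $f_i=f\big(\delta+\frac{(i-1)(1-\delta)}{r}\big)$. For $\mathbf{h}\in[0,1-\delta]^r$: $\psi_{com}(\mathbf{h})=\frac{1-\delta}{r}\sum_{i=1}^rH\big(\frac{h_i}{1-\delta}\big)+\big(r\sum_ih_i-\delta\big)\log2$; $c_1=\int_0^\delta f^2(u)du$, $\bar c_0=\frac1r\sum_if_ih_i$, $\bar\lambda_0(s)=\frac{1}{r\bar c_0}\sum_ih_i\lambda(sf_i)$, $\bar\lambda_0^*(y)=\sup_{s\in\mathbb{R}}(sy-\bar\lambda_0(s))$, with $\bar c_0\bar\lambda_0^*(y)$ understood as $\sup_s(\bar c_0sy-\frac1r\sum_ih_i\lambda(sf_i))$; $\psi_{int}(\mathbf{h},y)=-\big(r\sum_ih_i-\delta\big)\log2-\Big(\frac{\bar c_0^2}{2c_1}y^2+\bar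 c_0\bar\lambda_0^*(y)\Big)$; $\bar c_2=\int_0^\delta f^2(u)du+\frac1r\sum_if_i^2h_i$, $\bar G_0(x)=\int_\delta^1\log\operatorname{erf}(xf(u))du-\frac1r\sum_ih_i\log\operatorname{erf}(xf_i)$, $\psi_{ext}(\mathbf{h},x)=-(\bar c_2x^2-\bar G_0(x))$. *)

theory Defs
  imports "HOL-Analysis.Analysis"
begin

definition xlnx :: "real \<Rightarrow> real" where
  "xlnx t = (if t = 0 then 0 else t * ln t)"

definition Hent :: "real \<Rightarrow> real" where
  "Hent t = - xlnx t - xlnx (1 - t)"

definition erf :: "real \<Rightarrow> real" where
  "erf x = 2 / sqrt pi * integral {0..x} (\<lambda>t. exp (- (t ^ 2)))"

definition Phi :: "real \<Rightarrow> real" where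
  "Phi u = integral {..u} (\<lambda>t. exp (- (t ^ 2) / 2) / sqrt (2 * pi))"

definition lam :: "real \<Rightarrow> real" where
  "lam u = u ^ 2 / 2 + ln (2 * Phi u)"

definition fi :: "(real \<Rightarrow> real) \<Rightarrow> real \<Rightarrow> nat \<Rightarrow> nat \<Rightarrow> real" where
  "fi f \<delta> r i = f (\<delta> + (real i - 1) * (1 - \<delta>) / real r)"

definition psi_com :: "real \<Rightarrow> nat \<Rightarrow> (nat \<Rightarrow> real) \<Rightarrow> real" where
  "psi_com \<delta> r h =
     (1 - \<delta>) / real r * (\<Sum>i=1..r. Hent (h i / (1 - \<delta>)))
     + (real r * (\<Sum>i=1..r. h i) - \<delta>) * ln 2"

definition c1 :: "(real \<Rightarrow> real) \<Rightarrow> real \<Rightarrow> real" where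
  "c1 f \<delta> = integral {0..\<delta>} (\<lambda>u. (f u) ^ 2)"

definition c0bar :: "(real \<Rightarrow> real) \<Rightarrow> real \<Rightarrow> nat \<Rightarrow> (nat \<Rightarrow> real) \<Rightarrow> real" where
  "c0bar f \<delta> r h = (1 / real r) * (\<Sum>i=1..r. fi f \<delta> r i * h i)"

text \<open>c0bar * lambda0bar^*(y), understood as sup over s of
  (c0bar s y - (1/r) sum_i h_i lam(s f_i)); taken in the extended reals since the
  supremum may be +infinity.\<close>
definition c0_lam0star :: "(real \<Rightarrow> real) \<Rightarrow> real \<Rightarrow> nat \<Rightarrow> (nat \<Rightarrow> real) \<Rightarrow> real \<Rightarrow> ereal" where
  "c0_lam0star f \<delta> r h y =
     (SUP s\<in>(UNIV::real set). ereal (c0bar f \<delta> r h * s * y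
        - (1 / real r) * (\<Sum>i=1..r. h i * lam (s * fi f \<delta> r i))))"

definition psi_int :: "(real \<Rightarrow> real) \<Rightarrow> real \<Rightarrow> nat \<Rightarrow> (nat \<Rightarrow> real) \<Rightarrow> real \<Rightarrow> ereal" where
  "psi_int f \<delta> r h y =
     ereal (- (real r * (\<Sum>i=1..r. h i) - \<delta>) * ln 2)
     - (ereal ((c0bar f \<delta> r h) ^ 2 / (2 * c1 f \<delta>) * y ^ 2) + c0_lam0star f \<delta> r h y)"

definition c2bar :: "(real \<Rightarrow> real) \<Rightarrow> real \<Rightarrow> nat \<Rightarrow> (nat \<Rightarrow> real) \<Rightarrow> real" where
  "c2bar f \<delta> r h = integral {0..\<delta>} (\<lambda>u. (f u) ^ 2)
     + (1 / real r) * (\<Sum>i=1..r. (fi f \<delta> r i) ^ 2 * h i)"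

definition G0bar :: "(real \<Rightarrow> real) \<Rightarrow> real \<Rightarrow> nat \<Rightarrow> (nat \<Rightarrow> real) \<Rightarrow> real \<Rightarrow> real" where
  "G0bar f \<delta> r h x = integral {\<delta>..1} (\<lambda>u. ln (erf (x * f u)))
     - (1 / real r) * (\<Sum>i=1..r. h i * ln (erf (x * fi f \<delta> r i)))"

definition psi_ext :: "(real \<Rightarrow> real) \<Rightarrow> real \<Rightarrow> nat \<Rightarrow> (nat \<Rightarrow> real) \<Rightarrow> real \<Rightarrow> real" where
  "psi_ext f \<delta> r h x = - (c2bar f \<delta> r h * x ^ 2 - G0bar f \<delta> r h x)"

text \<open>The box [0,1-delta]^r; a point h is a function on indices, only h 1..h r matter.\<close>
definition box_r :: "real \<Rightarrow> nat \<Rightarrow> (nat \<Rightarrow> real) set" where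
  "box_r \<delta> r = {h. \<forall>i\<in>{1..r}. 0 \<le> h i \<and> h i \<le> 1 - \<delta>}"

definition concave_on_fun :: "(nat \<Rightarrow> real) set \<Rightarrow> ((nat \<Rightarrow> real) \<Rightarrow> real) \<Rightarrow> bool" where
  "concave_on_fun S g \<longleftrightarrow> (\<forall>h\<in>S. \<forall>h'\<in>S. \<forall>t\<in>{0..1::real}.
      t * g h + (1 - t) * g h' \<le> g (\<lambda>i. t * h i + (1 - t) * h' i))"

text \<open>Concavity for functions with values in [-infinity, +infinity) (hypograph convex).\<close>
definition concave_on_efun :: "(nat \<Rightarrow> real) set \<Rightarrow> ((nat \<Rightarrow> real) \<Rightarrow> ereal) \<Rightarrow> bool" where
  "concave_on_efun S g \<longleftrightarrow> (\<forall>h\<in>S. \<forall>h'\<in>S. \<forall>t\<in>{0<..<1::real}.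
      ereal t * g h + ereal (1 - t) * g h' \<le> g (\<lambda>i. t * h i + (1 - t) * h' i))"

end

theory Submission
  imports Defs
begin

lemma xlnx_convex_pos:
  "convex_on {0<..} (\<lambda>x::real. x * ln x)"
proof (rule convex_on_realI[where f'="\<lambda>x. ln x + 1"])
  show "connected {0::real<..}" by simp
  fix x :: real assume "x \<in> {0<..}"
  then show "((\<lambda>x. x * ln x) has_real_derivative ln x + 1) (at x)"
    by (auto intro!: derivative_eq_intros)
next
  fix x y :: real assume "x \<in> {0<..}" "y \<in> {0<..}" "x \<le> y"
  then show "ln x + 1 \<le> ln y + 1" by simp
qed

lemma xlnx_convex:
  assumes "0 \<le> a" "0 \<le> b" "0 \<le> t" "t \<le> 1"
  shows "xlnx (t*a + (1-t)*b) \<le> t * xlnx a + (1-t) * xlnx b"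
proof -
  consider "t = 0" | "t = 1" | "0 < t" "t < 1" using assms by linarith
  then show ?thesis
  proof cases
    case 1 then show ?thesis by simp
  next
    case 2 then show ?thesis by simp
  next
    case 3
    show ?thesis
    proof (cases "a = 0")
      case True
      show ?thesis
      proof (cases "b = 0")
        case True with \<open>a=0\<close> show ?thesis by (simp add: xlnx_def)
      next
        case False
        then have bp: "b > 0" using assms by simp
        have "ln((1-t)*b) = ln (1-t) + ln b" using 3 bp by (simp add: ln_mult)
        then have "(1-t)*b*ln((1-t)*b) = (1-t)*b*ln b + (1-t)*b*ln(1-t)"
          by (simp add: algebra_simps)
        moreover have "(1-t)*b*ln(1-t) \<le> 0"
          using 3 bp by (intro mult_nonneg_nonpos) auto
        ultimately show ?thesis using True 3 bp by (simp add: xlnx_def)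
      qed
    next
      case False
      then have ap: "a > 0" using assms by simp
      show ?thesis
      proof (cases "b = 0")
        case True
        have "ln(t*a) = ln t + ln a" using 3 ap by (simp add: ln_mult)
        then have "t*a*ln(t*a) = t*a*ln a + t*a*ln t"
          by (simp add: algebra_simps)
        moreover have "t*a*ln t \<le> 0"
          using 3 ap by (intro mult_nonneg_nonpos) auto
        ultimately show ?thesis using True 3 ap by (simp add: xlnx_def)
      next
        case False
        then have bp: "b > 0" using assms by simp
        have pos: "t*a + (1-t)*b > 0" using 3 ap bp
          by (metis add_pos_pos diff_gt_0_iff_gt mult_pos_pos)
        have "(t*a + (1-t)*b) * ln (t*a + (1-t)*b) \<le> t * (a * ln a) + (1-t) * (b * ln b)"
          using convex_onD[OF xlnx_convex_pos, of t b a] 3 ap bp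
          by (simp add: algebra_simps)
        then show ?thesis using pos ap bp by (simp add: xlnx_def)
      qed
    qed
  qed
qed

lemma Hent_concave:
  assumes "0 \<le> a" "a \<le> 1" "0 \<le> b" "b \<le> 1" "0 \<le> t" "t \<le> 1"
  shows "t * Hent a + (1-t) * Hent b \<le> Hent (t*a + (1-t)*b)"
proof -
  have e: "1 - (t*a + (1-t)*b) = t*(1-a) + (1-t)*(1-b)" by (simp add: algebra_simps)
  have "xlnx (t*a + (1-t)*b) \<le> t * xlnx a + (1-t) * xlnx b"
    using assms by (intro xlnx_convex) auto
  moreover have "xlnx (t*(1-a) + (1-t)*(1-b)) \<le> t * xlnx (1-a) + (1-t) * xlnx (1-b)"
    using assms by (intro xlnx_convex) auto
  ultimately show ?thesis unfolding Hent_def e by (simp add: algebra_simps)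
qed

lemma ereal_key:
  fixes S1 S2 Sm :: ereal
  assumes t: "0<t" "t<1" and s: "S1 > -\<infinity>" "S2 > -\<infinity>" "Sm > -\<infinity>"
    and sup: "\<And>A B. S1 = ereal A \<Longrightarrow> S2 = ereal B \<Longrightarrow> Sm \<le> ereal (t*A+(1-t)*B)"
    and a: "a = t*a1+(1-t)*a2" and b: "b \<le> t*b1+(1-t)*b2"
  shows "ereal t * (ereal a1 - (ereal b1 + S1)) + ereal (1-t) * (ereal a2 - (ereal b2 + S2))
     \<le> ereal a - (ereal b + Sm)"
proof (cases S1)
  case (real A)
  show ?thesis
  proof (cases S2)
    case (real B)
    have "Sm \<le> ereal (t*A+(1-t)*B)" using sup real \<open>S1 = ereal A\<close> by blast
    moreover obtain C where C: "Sm = ereal C" using s(3) calculation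
      by (cases Sm) auto
    ultimately have "C \<le> t*A+(1-t)*B" by simp
    then have "t*(a1 - (b1 + A)) + (1-t)*(a2 - (b2 + B)) \<le> a - (b + C)"
      using a b by (simp add: algebra_simps)
    then show ?thesis using real \<open>S1 = ereal A\<close> C by simp
  next
    case PInf
    have e: "ereal (1-t) * (ereal a2 - (ereal b2 + S2)) = -\<infinity>" using PInf t by simp
    have ne: "ereal t * (ereal a1 - (ereal b1 + S1)) \<noteq> \<infinity>" using real t by simp
    show ?thesis apply (simp only: e) using ne
      by (cases "ereal t * (ereal a1 - (ereal b1 + S1))") auto
  next
    case MInf then show ?thesis using s by simp
  qed
next
  case PInf
  have e: "ereal t * (ereal a1 - (ereal b1 + S1)) = -\<infinity>" using PInf t by simp
  have ne: "ereal (1-t) * (ereal a2 - (ereal b2 + S2)) \<noteq> \<infinity>" using s t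
    by (cases S2) auto
  show ?thesis apply (simp only: e) using ne
    by (cases "ereal (1-t) * (ereal a2 - (ereal b2 + S2))") auto
next
  case MInf then show ?thesis using s by simp
qed

lemma sum_mix:
  fixes c h h' :: "nat \<Rightarrow> real" and t :: real
  shows   "(\<Sum>i=1..r. c i * (t*h i + (1-t)*h' i)) = t*(\<Sum>i=1..r. c i*h i) + (1-t)*(\<Sum>i=1..r. c i * h' i)"
proof -
  have "(\<Sum>i=1..r. c i * (t*h i + (1-t)*h' i)) = (\<Sum>i=1..r. t*(c i*h i) + (1-t)*(c i*h' i))"
    by (intro sum.cong) (auto simp: algebra_simps)
  also have "\<dots> = t*(\<Sum>i=1..r. c i*h i) + (1-t)*(\<Sum>i=1..r. c i * h' i)"
    by (simp add: sum.distrib sum_distrib_left)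
  finally show ?thesis .
qed

lemma sum_mix':
  fixes c h h' :: "nat \<Rightarrow> real" and t :: real
  shows   "(\<Sum>i=1..r. (t*h i + (1-t)*h' i) * c i) = t*(\<Sum>i=1..r. h i * c i) + (1-t)*(\<Sum>i=1..r. h' i * c i)"
  using sum_mix[of c t h h' r] by (simp add: mult.commute)

lemma sum_mix0:
  fixes c h h' :: "nat \<Rightarrow> real" and t :: real
  shows   "(\<Sum>i=1..r. (t*h i + (1-t)*h' i)) = t*(\<Sum>i=1..r. h i) + (1-t)*(\<Sum>i=1..r. h' i)"
  using sum_mix[of "\<lambda>_. 1" t h h' r] by simp

lemma lin_scale: "(k::real)*(t*a+(1-t)*b) = t*(k*a)+(1-t)*(k*b)"
  by (simp add: algebra_simps)

lemma c0bar_mix: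
  "c0bar f \<delta> r (\<lambda>i. t*h i + (1-t)*h' i) = t * c0bar f \<delta> r h + (1-t) * c0bar f \<delta> r h'"
  unfolding c0bar_def sum_mix by (rule lin_scale)

lemma sq_convex:
  fixes p q s :: real assumes "0 \<le> s" "s \<le> 1"
  shows "(s*p + (1-s)*q)^2 \<le> s*p^2 + (1-s)*q^2"
proof -
  have "s*p^2 + (1-s)*q^2 - (s*p + (1-s)*q)^2 = s*(1-s)*(p-q)^2"
    by (simp add: power2_eq_square algebra_simps)
  moreover have "s*(1-s)*(p-q)^2 \<ge> 0" using assms by simp
  ultimately show ?thesis by linarith
qed

lemma com_lin:
  fixes K P Q R U V r d l t :: real
  assumes "K*(t*P+(1-t)*Q) \<le> K*R"
  shows "t*(K*P + (r*U - d)*l) + (1-t)*(K*Q + (r*V - d)*l) \<le> K*R + (r*(t*U+(1-t)*V) - d)*l"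
proof -
  have "t*(K*P + (r*U - d)*l) + (1-t)*(K*Q + (r*V - d)*l) = K*(t*P+(1-t)*Q) + (r*(t*U+(1-t)*V) - d)*l"
    by (simp add: algebra_simps)
  then show ?thesis using assms by linarith
qed

lemma ext_lin:
  fixes K k I X A1 A2 B1 B2 t :: real
  shows "t*(-((K + k*A1)*X - (I - k*B1))) + (1-t)*(-((K + k*A2)*X - (I - k*B2)))
    \<le> -((K + k*(t*A1+(1-t)*A2))*X - (I - k*(t*B1+(1-t)*B2)))"
proof -
  have "t*(-((K + k*A1)*X - (I - k*B1))) + (1-t)*(-((K + k*A2)*X - (I - k*B2)))
    = -((K + k*(t*A1+(1-t)*A2))*X - (I - k*(t*B1+(1-t)*B2)))"
    by (simp add: algebra_simps)
  then show ?thesis by simp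
qed

lemma L_lin:
  fixes C C' P Q k s y t :: real
  shows "(t*C+(1-t)*C') * s * y - k*(t*P+(1-t)*Q) = t*(C * s * y - k*P) + (1-t)*(C' * s * y - k*Q)"
  by (simp add: algebra_simps)

lemma b_lin:
  fixes Z X Y c y t :: real
  assumes "Z*(y^2/c) \<le> (t*X+(1-t)*Y)*(y^2/c)"
  shows "Z/c*y^2 \<le> t*(X/c*y^2) + (1-t)*(Y/c*y^2)"
proof -
  define w where "w = y^2/c"
  have e1: "Z/c*y^2 = Z*w" "X/c*y^2 = X*w" "Y/c*y^2 = Y*w" unfolding w_def by simp_all
  have e2: "(t*X+(1-t)*Y)*w = t*(X*w) + (1-t)*(Y*w)" by (simp add: algebra_simps)
  show ?thesis using assms unfolding e1 e2 w_def[symmetric] .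
qed

lemma int_lin:
  fixes r U V d l t :: real
  shows "- (r*(t*U+(1-t)*V) - d) * l = t*(- (r*U - d) * l) + (1-t)*(- (r*V - d) * l)"
  by (simp add: algebra_simps)

theorem lemma4:
  fixes f :: "real \<Rightarrow> real" and \<delta> x y :: real and r :: nat
  assumes "continuous_on {0..1} f"
    and "mono_on {0..1} f"
    and "\<forall>u\<in>{0..1}. 0 \<le> f u"
    and "\<forall>u\<in>{0<..1}. 0 < f u"
    and "0 < \<delta>" and "\<delta> < 1"
    and "0 < r"
    and "0 < x"
  shows "concave_on_fun (box_r \<delta> r) (\<lambda>h. psi_com \<delta> r h)
    \<and> concave_on_efun (box_r \<delta> r) (\<lambda>h. psi_int f \<delta> r h y)
    \<and> concave_on_fun (box_r \<delta> r) (\<lambda>h. psi_ext f \<delta> r h x)"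
proof (intro conjI)
  show "concave_on_fun (box_r \<delta> r) (\<lambda>h. psi_com \<delta> r h)"
    unfolding concave_on_fun_def
  proof (intro ballI)
    fix h h' :: "nat \<Rightarrow> real" and t :: real assume h: "h \<in> box_r \<delta> r" and h': "h' \<in> box_r \<delta> r" and t: "t \<in> {0..1::real}"
    have d: "1 - \<delta> > 0" using assms by simp
    have "(\<Sum>i=1..r. t * Hent (h i / (1-\<delta>)) + (1-t) * Hent (h' i / (1-\<delta>)))
        \<le> (\<Sum>i=1..r. Hent ((t * h i + (1-t) * h' i) / (1-\<delta>)))"
    proof (rule sum_mono)
      fix i assume i: "i \<in> {1..r}"
      have e: "(t * h i + (1-t) * h' i) / (1-\<delta>) = t * (h i/(1-\<delta>)) + (1-t) * (h' i / (1-\<delta>))"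
        by (simp add: add_divide_distrib)
      show "t * Hent (h i / (1-\<delta>)) + (1-t) * Hent (h' i / (1-\<delta>))
        \<le> Hent ((t * h i + (1-t) * h' i) / (1-\<delta>))"
        unfolding e using h h' i t d
        by (intro Hent_concave) (auto simp: box_r_def divide_le_eq_1)
    qed
    then have "(1-\<delta>)/real r * (\<Sum>i=1..r. t * Hent (h i / (1-\<delta>)) + (1-t) * Hent (h' i / (1-\<delta>)))
        \<le> (1-\<delta>)/real r * (\<Sum>i=1..r. Hent ((t * h i + (1-t) * h' i) / (1-\<delta>)))"
      using d by (intro mult_left_mono) auto
    then show "t * psi_com \<delta> r h + (1 - t) * psi_com \<delta> r h'
        \<le> psi_com \<delta> r (\<lambda>i. t * h i + (1 - t) * h' i)"
      unfolding psi_com_def sum_mix0 sum.distrib sum_distrib_left[symmetric] by (rule com_lin)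
  qed
next
  show "concave_on_fun (box_r \<delta> r) (\<lambda>h. psi_ext f \<delta> r h x)"
    unfolding concave_on_fun_def
  proof (intro ballI)
    fix h h' :: "nat \<Rightarrow> real" and t :: real assume t: "t \<in> {0..1::real}"
    show "t * psi_ext f \<delta> r h x + (1 - t) * psi_ext f \<delta> r h' x
        \<le> psi_ext f \<delta> r (\<lambda>i. t * h i + (1 - t) * h' i) x"
      unfolding psi_ext_def c2bar_def G0bar_def sum_mix sum_mix'
      by (rule ext_lin)
  qed
next
  show "concave_on_efun (box_r \<delta> r) (\<lambda>h. psi_int f \<delta> r h y)"
    unfolding concave_on_efun_def
  proof (intro ballI)
    fix h h' :: "nat \<Rightarrow> real" and t :: real assume t: "t \<in> {0<..<1::real}"
    have t1: "0 < t" and t2: "t < 1" using t by auto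
    define hm where "hm = (\<lambda>i. t * h i + (1 - t) * h' i)"
    define L where "L = (\<lambda>s g. c0bar f \<delta> r g * s * y
        - (1 / real r) * (\<Sum>i=1..r. g i * lam (s * fi f \<delta> r i)))"
    have S: "c0_lam0star f \<delta> r g y = (SUP s\<in>UNIV. ereal (L s g))" for g
      unfolding c0_lam0star_def L_def by simp
    have Lmix: "L s hm = t * L s h + (1-t) * L s h'" for s
      unfolding L_def hm_def c0bar_mix sum_mix' by (rule L_lin)
    have gt: "c0_lam0star f \<delta> r g y > -\<infinity>" for g
    proof -
      have le: "ereal (L 0 g) \<le> c0_lam0star f \<delta> r g y" unfolding S by (rule SUP_upper) auto
      have "-\<infinity> < ereal (L 0 g)" by simp
      then show ?thesis using le by (rule less_le_trans)
    qed
    have c1: "c1 f \<delta> \<ge> 0"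
      unfolding c1_def
    proof (cases "(\<lambda>u. (f u)^2) integrable_on {0..\<delta>}")
      case True then show "0 \<le> integral {0..\<delta>} (\<lambda>u. (f u)^2)"
        by (rule integral_nonneg) simp
    next
      case False then show "0 \<le> integral {0..\<delta>} (\<lambda>u. (f u)^2)"
        by (simp add: not_integrable_integral)
    qed
    have b: "(c0bar f \<delta> r hm)^2 / (2 * c1 f \<delta>) * y^2 \<le>
        t * ((c0bar f \<delta> r h)^2 / (2 * c1 f \<delta>) * y^2) + (1-t) * ((c0bar f \<delta> r h')^2 / (2 * c1 f \<delta>) * y^2)"
    proof -
      have "(c0bar f \<delta> r hm)^2 \<le> t * (c0bar f \<delta> r h)^2 + (1-t) * (c0bar f \<delta> r h')^2"
        unfolding hm_def c0bar_mix using t by (intro sq_convex) auto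
      moreover have "y^2 / (2 * c1 f \<delta>) \<ge> 0" using c1 by simp
      ultimately have "(c0bar f \<delta> r hm)^2 * (y^2 / (2 * c1 f \<delta>)) \<le>
          (t * (c0bar f \<delta> r h)^2 + (1-t) * (c0bar f \<delta> r h')^2) * (y^2 / (2 * c1 f \<delta>))"
        by (rule mult_right_mono)
      then show ?thesis by (rule b_lin)
    qed
    have aeq: "- (real r * (\<Sum>i=1..r. hm i) - \<delta>) * ln 2 =
        t * (- (real r * (\<Sum>i=1..r. h i) - \<delta>) * ln 2) + (1-t) * (- (real r * (\<Sum>i=1..r. h' i) - \<delta>) * ln 2)"
      unfolding hm_def sum_mix0 by (rule int_lin)
    have sup: "c0_lam0star f \<delta> r hm y \<le> ereal (t*A+(1-t)*B)"
      if A: "c0_lam0star f \<delta> r h y = ereal A" and B: "c0_lam0star f \<delta> r h' y = ereal B" for A B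
      unfolding S
    proof (rule SUP_least)
      fix s :: real
      have "ereal (L s h) \<le> c0_lam0star f \<delta> r h y" unfolding S by (rule SUP_upper) simp
      then have 1: "L s h \<le> A" using A by simp
      have "ereal (L s h') \<le> c0_lam0star f \<delta> r h' y" unfolding S by (rule SUP_upper) simp
      then have 2: "L s h' \<le> B" using B by simp
      from 1 2 have "L s h \<le> A" "L s h' \<le> B" by auto
      then have "t * L s h + (1-t) * L s h' \<le> t*A+(1-t)*B" using t
        by (intro add_mono mult_left_mono) auto
      then show "ereal (L s hm) \<le> ereal (t*A+(1-t)*B)" unfolding Lmix by simp
    qed
    have "ereal t * psi_int f \<delta> r h y + ereal (1 - t) * psi_int f \<delta> r h' y \<le> psi_int f \<delta> r hm y"
      unfolding psi_int_def
      by (rule ereal_key[OF t1 t2 gt gt gt sup aeq b])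
    then show "ereal t * psi_int f \<delta> r h y + ereal (1 - t) * psi_int f \<delta> r h' y
        \<le> psi_int f \<delta> r (\<lambda>i. t * h i + (1 - t) * h' i) y" unfolding hm_def .
  qed
qed

end
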